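(* Let $k\ge0$, $n\ge k+4$ and let $Z$ be a positive $n\times(k+4)$ matrix. Then there is an open neighborhood $B\subset\mathrm{Gr}_{k,n;1}$ of $\mathrm{Gr}^{\ge}_{k,n;1}$ such that the formula $(U,W)\mapsto(UZ,WZ)$ defines a smooth submersion $B\to\mathrm{Gr}_{k,k+4;1}$, extending the amplituhedron map on $\mathrm{Gr}^{\ge}_{k,n;1}$.
   Context: For $m\ge k+2$, $\mathrm{Gr}_{k,m;1}$ denotes the two-step flag variety of pairs $(U,W)$ of subspaces $U\subset W\subset\mathbb{R}^m$ with $\dim U=k$, $\dim W=k+2$. A representative of $(U,W)\in\mathrm{Gr}_{k,n;1}$ is a pair $(C;D)$ with $C$ a $k\times n$ matrix with row span $U$ and $D$ a $2\times n$ matrix such that rows of $C$ and $D$ together span $W$; $[D;C]$ is the $(k+2)\times n$ matrix with the rows of $D$ above those of $C$. $\mathrm{Gr}^{\ge}_{k,n;1}$ is the set of $(U,W)$ having a representative with all maximal minors of $C$ and of $[D;C]$ nonnegative. $Z$ positive means all maximal minors of the $n\times(k+4)$ matrix $Z$ are positive. Here $UZ=\{uZ: u\in U\}$ and similarly for $WZ$. *)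

theory Defs
  imports "HOL-Analysis.Analysis" "HOL-Combinatorics.Permutations"
begin

text \<open>Matrices are functions nat => nat => real; an r x c matrix is one whose
entries vanish outside the index range {..<r} x {..<c}.\<close>

type_synonym rmat = "nat \<Rightarrow> nat \<Rightarrow> real"

definition is_mat :: "nat \<Rightarrow> nat \<Rightarrow> rmat \<Rightarrow> bool" where
  "is_mat r c A \<longleftrightarrow> (\<forall>i j. (r \<le> i \<or> c \<le> j) \<longrightarrow> A i j = 0)"

definition det_sq :: "nat \<Rightarrow> rmat \<Rightarrow> real" where
  "det_sq m A = (\<Sum>p | p permutes {..<m}. of_int (sign p) * (\<Prod>i<m. A i (p i)))"

definition sel :: "nat \<Rightarrow> nat \<Rightarrow> (nat \<Rightarrow> nat) set" where
  "sel m c = {s. (\<forall>i j. i < j \<longrightarrow> j < m \<longrightarrow> s i < s j) \<and> (\<forall>i<m. s i < c)}"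

definition max_minor :: "nat \<Rightarrow> rmat \<Rightarrow> (nat \<Rightarrow> nat) \<Rightarrow> real" where
  "max_minor r A s = det_sq r (\<lambda>i j. A i (s j))"

definition minors_nonneg :: "nat \<Rightarrow> nat \<Rightarrow> rmat \<Rightarrow> bool" where
  "minors_nonneg r c A \<longleftrightarrow> (\<forall>s\<in>sel r c. max_minor r A s \<ge> 0)"

definition positive_mat :: "nat \<Rightarrow> nat \<Rightarrow> rmat \<Rightarrow> bool" where
  "positive_mat n m Z \<longleftrightarrow> is_mat n m Z \<and>
     (\<forall>s\<in>sel m n. det_sq m (\<lambda>i j. Z (s i) j) > 0)"

definition mat_mul :: "nat \<Rightarrow> rmat \<Rightarrow> rmat \<Rightarrow> rmat" where
  "mat_mul s A B = (\<lambda>i j. \<Sum>l<s. A i l * B l j)"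

definition rowspan :: "nat \<Rightarrow> rmat \<Rightarrow> (nat \<Rightarrow> real) set" where
  "rowspan r A = {v. \<exists>a. v = (\<lambda>j. \<Sum>i<r. a i * A i j)}"

text \<open>A representative of a point of Gr_{k,c;1} is stored as the single
(k+2) x c matrix [D;C]: rows 0,1 form D, rows 2..k+1 form C.  It must have
full row rank k+2 (so that dim U = k and dim W = k+2).\<close>
definition lowerC :: "rmat \<Rightarrow> rmat" where
  "lowerC A = (\<lambda>i j. A (i + 2) j)"

definition full_row_rank :: "nat \<Rightarrow> nat \<Rightarrow> rmat \<Rightarrow> bool" where
  "full_row_rank r c A \<longleftrightarrow> (\<exists>s\<in>sel r c. max_minor r A s \<noteq> 0)"

definition is_rep :: "nat \<Rightarrow> nat \<Rightarrow> rmat \<Rightarrow> bool" where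
  "is_rep k c A \<longleftrightarrow> is_mat (k + 2) c A \<and> full_row_rank (k + 2) c A"

definition flag_of :: "nat \<Rightarrow> rmat \<Rightarrow> (nat \<Rightarrow> real) set \<times> (nat \<Rightarrow> real) set" where
  "flag_of k A = (rowspan k (lowerC A), rowspan (k + 2) A)"

text \<open>The two-step flag variety Gr_{k,c;1} (pairs U \<subseteq> W of subspaces of R^c
with dim U = k, dim W = k+2) and its nonnegative part.\<close>
definition Gr :: "nat \<Rightarrow> nat \<Rightarrow> ((nat \<Rightarrow> real) set \<times> (nat \<Rightarrow> real) set) set" where
  "Gr k c = flag_of k ` {A. is_rep k c A}"

definition Gr_nonneg :: "nat \<Rightarrow> nat \<Rightarrow> ((nat \<Rightarrow> real) set \<times> (nat \<Rightarrow> real) set) set" where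
  "Gr_nonneg k c = flag_of k ` {A. is_rep k c A \<and> minors_nonneg k c (lowerC A)
                                   \<and> minors_nonneg (k + 2) c A}"

definition mat_open :: "nat \<Rightarrow> nat \<Rightarrow> rmat set \<Rightarrow> bool" where
  "mat_open r c S \<longleftrightarrow> (\<forall>A\<in>S. is_mat r c A \<and> (\<exists>e>0. \<forall>A'. is_mat r c A' \<and>
      (\<forall>i<r. \<forall>j<c. \<bar>A' i j - A i j\<bar> < e) \<longrightarrow> A' \<in> S))"

text \<open>Quotient topology on Gr_{k,c;1}: B is open iff its set of representatives is open.\<close>
definition Gr_open :: "nat \<Rightarrow> nat \<Rightarrow> ((nat \<Rightarrow> real) set \<times> (nat \<Rightarrow> real) set) set \<Rightarrow> bool" where
  "Gr_open k c B \<longleftrightarrow> B \<subseteq> Gr k c \<and> mat_open (k + 2) c {A. is_rep k c A \<and> flag_of k A \<in> B}"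

definition img :: "nat \<Rightarrow> rmat \<Rightarrow> (nat \<Rightarrow> real) set \<Rightarrow> (nat \<Rightarrow> real) set" where
  "img n Z V = (\<lambda>v. (\<lambda>j. \<Sum>i<n. v i * Z i j)) ` V"

definition amp_map :: "nat \<Rightarrow> rmat \<Rightarrow> (nat \<Rightarrow> real) set \<times> (nat \<Rightarrow> real) set
                        \<Rightarrow> (nat \<Rightarrow> real) set \<times> (nat \<Rightarrow> real) set" where
  "amp_map n Z UW = (img n Z (fst UW), img n Z (snd UW))"

text \<open>Lie algebra of the structure group acting on representatives [D;C]:
(k+2) x (k+2) matrices G whose block (rows of C) x (columns of D) vanishes,
i.e. C |-> aC, D |-> eD + fC infinitesimally.\<close>
definition parabolic_lie :: "nat \<Rightarrow> rmat \<Rightarrow> bool" where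
  "parabolic_lie k G \<longleftrightarrow> is_mat (k + 2) (k + 2) G \<and> (\<forall>i j. 2 \<le> i \<longrightarrow> j < 2 \<longrightarrow> G i j = 0)"

text \<open>Submersion condition at a representative A for the map induced by the
(linear, hence smooth) lift A |-> A Z: the differential of the lift plus the
tangent space of the structure-group orbit through A Z (the kernel of the
differential of the quotient map) span all (k+2) x m matrices.\<close>
definition submersive_at :: "nat \<Rightarrow> nat \<Rightarrow> nat \<Rightarrow> rmat \<Rightarrow> rmat \<Rightarrow> bool" where
  "submersive_at k n m Z A \<longleftrightarrow>
     (\<forall>Y. is_mat (k + 2) m Y \<longrightarrow> (\<exists>X G. is_mat (k + 2) n X \<and> parabolic_lie k G \<and>
        Y = (\<lambda>i j. mat_mul n X Z i j + mat_mul (k + 2) G (mat_mul n A Z) i j)))"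

end

theory Submission
  imports Defs "Jordan_Normal_Form.Determinant"
begin

abbreviation JM :: "nat \<Rightarrow> rmat \<Rightarrow> real mat" where
  "JM m A \<equiv> Matrix.mat m m (\<lambda>(i,j). A i j)"

lemma det_sq_det: "det_sq m A = Determinant.det (JM m A)"
  unfolding det_sq_def det_def by (simp add: atLeast0LessThan)

lemma det_sq_cong: "(\<And>i j. i < m \<Longrightarrow> j < m \<Longrightarrow> X i j = Y i j) \<Longrightarrow> det_sq m X = det_sq m Y"
proof -
  assume h: "\<And>i j. i < m \<Longrightarrow> j < m \<Longrightarrow> X i j = Y i j"
  show ?thesis unfolding det_sq_def
  proof (intro sum.cong refl arg_cong2[where f="(*)"] prod.cong)
    fix p i assume "p \<in> {p. p permutes {..<m}}" "i \<in> {..<m}"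
    then have "p i < m" using permutes_in_image by fastforce
    then show "X i (p i) = Y i (p i)" using h \<open>i \<in> {..<m}\<close> by auto
  qed
qed

lemma JM_mult: "JM m G * JM m X = JM m (\<lambda>i j. \<Sum>l<m. G i l * X l j)"
  by (rule eq_matI) (auto simp: scalar_prod_def atLeast0LessThan intro!: sum.cong)

lemma det_sq_mult: "det_sq m (\<lambda>i j. \<Sum>l<m. G i l * X l j) = det_sq m G * det_sq m X"
  unfolding det_sq_det JM_mult[symmetric]
  by (rule det_mult) auto

lemma det_sq_transpose: "det_sq m (\<lambda>i j. X j i) = det_sq m X"
proof -
  have "JM m (\<lambda>i j. X j i) = transpose_mat (JM m X)"
    by (rule eq_matI) auto
  then show ?thesis unfolding det_sq_det using det_transpose[of "JM m X" m] by simp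
qed

lemma det_sq_left_kernel:
  assumes "\<And>j. j < m \<Longrightarrow> (\<Sum>i<m. v i * X i j) = 0" and "i0 < m" and "v i0 \<noteq> 0"
  shows "det_sq m X = 0"
proof -
  let ?T = "transpose_mat (JM m X)"
  let ?v = "vec m v"
  have T: "?T \<in> carrier_mat m m" by auto
  have "?v \<noteq> 0\<^sub>v m" using assms(2,3) by (metis dim_vec index_vec index_zero_vec(1))
  moreover have "?T *\<^sub>v ?v = 0\<^sub>v m"
    by (rule eq_vecI) (auto simp: scalar_prod_def atLeast0LessThan mult.commute assms(1))
  ultimately have "Determinant.det ?T = 0"
    using det_0_iff_vec_prod_zero[OF T] by (metis vec_carrier)
  then show ?thesis unfolding det_sq_det using det_transpose[of "JM m X" m] by simp
qed

lemma det_sq_zero_kernel: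
  assumes "det_sq m X = 0"
  shows "\<exists>w. (\<forall>i<m. (\<Sum>j<m. X i j * w j) = 0) \<and> (\<exists>j<m. w j \<noteq> 0)"
proof -
  have T: "JM m X \<in> carrier_mat m m" by auto
  from assms obtain v where v: "v \<in> carrier_vec m" "v \<noteq> 0\<^sub>v m" "JM m X *\<^sub>v v = 0\<^sub>v m"
    using det_0_iff_vec_prod_zero[OF T] unfolding det_sq_det by auto
  have "\<exists>j<m. v $ j \<noteq> 0" using v(1,2) by (metis carrier_vecD eq_vecI index_zero_vec(1,2))
  moreover have "\<forall>i<m. (\<Sum>j<m. X i j * v $ j) = 0"
  proof (intro allI impI)
    fix i assume "i < m"
    then have "(JM m X *\<^sub>v v) $ i = 0" using v(3) by simp
    then show "(\<Sum>j<m. X i j * v $ j) = 0" using \<open>i<m\<close> v(1)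
      by (simp add: scalar_prod_def atLeast0LessThan)
  qed
  ultimately show ?thesis by blast
qed

lemma det_sq_permute_rows:
  assumes "p permutes {..<m}"
  shows "det_sq m (\<lambda>i j. X (p i) j) = of_int (sign p) * det_sq m X"
proof -
  have p: "p permutes {0..<m}" using assms by (simp add: atLeast0LessThan)
  have "JM m (\<lambda>i j. X (p i) j) = Matrix.mat m m (\<lambda>(i,j). JM m X $$ (p i, j))"
  proof (rule eq_matI)
    fix i j assume "i < dim_row (Matrix.mat m m (\<lambda>(i,j). JM m X $$ (p i, j)))" "j < dim_col (Matrix.mat m m (\<lambda>(i,j). JM m X $$ (p i, j)))"
    then have ij: "i < m" "j < m" by auto
    then have "p i < m" using permutes_in_image[OF p] by fastforce
    then show "JM m (\<lambda>i j. X (p i) j) $$ (i, j) = Matrix.mat m m (\<lambda>(i,j). JM m X $$ (p i, j)) $$ (i, j)"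
      using ij by simp
  qed auto
  then show ?thesis unfolding det_sq_det using det_permute_rows[OF _ p, of "JM m X"] by simp
qed

lemma det_sq_equal_rows:
  assumes "i \<noteq> j" "i < m" "j < m" "\<And>l. l < m \<Longrightarrow> X i l = X j l"
  shows "det_sq m X = 0"
  unfolding det_sq_det
  by (rule det_identical_rows[OF _ assms(1-3)]) (auto intro!: eq_vecI simp: assms(2,3,4))

lemma det_sq_zero_row:
  assumes "i < m" "\<And>l. l < m \<Longrightarrow> X i l = 0"
  shows "det_sq m X = 0"
  unfolding det_sq_def
proof (rule sum.neutral, intro ballI)
  fix p assume "p \<in> {p. p permutes {..<m}}"
  then have "p i < m" using permutes_in_image assms(1) by fastforce
  then have "(\<Prod>i<m. X i (p i)) = 0" using assms by (intro prod_zero) auto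
  then show "of_int (sign p) * (\<Prod>i<m. X i (p i)) = 0" by simp
qed

lemma det_sq_inverse:
  assumes "det_sq m Z \<noteq> 0"
  shows "\<exists>W. \<forall>i<m. \<forall>j<m. (\<Sum>l<m. W i l * Z l j) = (if i = j then 1 else 0)"
proof -
  let ?A = "JM m Z"
  have A: "?A \<in> carrier_mat m m" by auto
  define d where "d = Determinant.det ?A"
  have d: "d \<noteq> 0" using assms unfolding d_def det_sq_det .
  have e: "adj_mat ?A * ?A = d \<cdot>\<^sub>m 1\<^sub>m m" using adj_mat(3)[OF A] unfolding d_def .
  have ad: "adj_mat ?A \<in> carrier_mat m m" using adj_mat(1)[OF A] .
  show ?thesis
  proof (intro exI allI impI)
    fix i j assume ij: "i < m" "j < m"
    have "(adj_mat ?A * ?A) $$ (i,j) = (\<Sum>l<m. adj_mat ?A $$ (i,l) * Z l j)"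
      using ij ad by (simp add: scalar_prod_def atLeast0LessThan)
    then have "(\<Sum>l<m. adj_mat ?A $$ (i,l) * Z l j) = (if i = j then d else 0)"
      using ij e by (simp split: if_splits)
    then show "(\<Sum>l<m. (adj_mat ?A $$ (i,l) / d) * Z l j) = (if i = j then 1 else 0)"
      using d by (simp add: sum_divide_distrib[symmetric])
  qed
qed

lemma det_sq_last_row_unit:
  assumes "p < Suc m" "\<And>j. j < Suc m \<Longrightarrow> X m j = (if j = p then 1 else 0)"
  shows "det_sq (Suc m) X = (-1)^(m+p) * det_sq m (\<lambda>i j. X i (if j < p then j else Suc j))"
proof -
  let ?A = "JM (Suc m) X"
  have A: "?A \<in> carrier_mat (Suc m) (Suc m)" by auto
  have "det_sq (Suc m) X = (\<Sum>j<Suc m. ?A $$ (m,j) * cofactor ?A m j)"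
    unfolding det_sq_det by (rule laplace_expansion_row[OF A]) auto
  also have "\<dots> = (\<Sum>j<Suc m. if j = p then cofactor ?A m j else 0)"
    by (rule sum.cong) (auto simp: assms(2))
  also have "\<dots> = cofactor ?A m p" using assms(1) by simp
  also have "\<dots> = (-1)^(m+p) * det_sq m (\<lambda>i j. X i (if j < p then j else Suc j))"
    unfolding cofactor_def det_sq_det
    by (rule arg_cong[where f="\<lambda>x. _ * Determinant.det x"], rule eq_matI)
       (auto simp: mat_delete_def)
  finally show ?thesis .
qed

definition SEL :: "nat \<Rightarrow> nat \<Rightarrow> (nat \<Rightarrow> nat) set" where
  "SEL m c = {s. (\<forall>i j. i < j \<longrightarrow> j < m \<longrightarrow> s i < s j) \<and> (\<forall>i<m. s i < c) \<and> (\<forall>i. m \<le> i \<longrightarrow> s i = 0)}"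

lemma SEL_sel: "s \<in> SEL m c \<Longrightarrow> s \<in> sel m c"
  unfolding SEL_def sel_def by auto

lemma finite_SEL: "finite (SEL m c)"
proof -
  have "SEL m c \<subseteq> (\<lambda>g i. if i < m then g i else 0) ` PiE {..<m} (\<lambda>_. {..<c})"
  proof
    fix s assume s: "s \<in> SEL m c"
    have "s = (\<lambda>i. if i < m then restrict s {..<m} i else 0)"
      using s unfolding SEL_def by (auto simp: fun_eq_iff)
    moreover have "restrict s {..<m} \<in> PiE {..<m} (\<lambda>_. {..<c})"
      using s unfolding SEL_def by auto
    ultimately show "s \<in> (\<lambda>g i. if i < m then g i else 0) ` PiE {..<m} (\<lambda>_. {..<c})" by blast
  qed
  then show ?thesis by (rule finite_subset) (auto intro!: finite_PiE)
qed

lemma strict_inc_list: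
  fixes s :: "nat \<Rightarrow> nat"
  assumes "\<forall>i j. i < j \<longrightarrow> j < m \<longrightarrow> s i < s j"
  shows "sorted_wrt (<) (map s [0..<m])"
  using assms by (auto simp: sorted_wrt_iff_nth_less)

lemma strict_inc_unique:
  fixes s s' :: "nat \<Rightarrow> nat"
  assumes "\<forall>i j. i < j \<longrightarrow> j < m \<longrightarrow> s i < s j" "\<forall>i j. i < j \<longrightarrow> j < m \<longrightarrow> s' i < s' j"
    and "s ` {..<m} = s' ` {..<m}" and "i < m"
  shows "s i = s' i"
proof -
  have "set (map s [0..<m]) = set (map s' [0..<m])" using assms(3) by (simp add: atLeast0LessThan)
  then have "map s' [0..<m] = map s [0..<m]"
    using strict_sorted_equal[OF strict_inc_list[OF assms(1)] strict_inc_list[OF assms(2)]] by simp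
  then show ?thesis using assms(4)
    by (metis add_0 diff_zero length_map length_upt nth_map nth_upt)
qed

lemma strict_inc_exists:
  assumes "finite S" "card S = m" "S \<subseteq> {..<c}"
  shows "\<exists>s\<in>SEL m c. s ` {..<m} = S"
proof -
  define xs where "xs = sorted_list_of_set S"
  have xs: "sorted_wrt (<) xs" "length xs = m" "set xs = S"
    using assms unfolding xs_def by (auto simp: strict_sorted_list_of_set)
  define s where "s = (\<lambda>i. if i < m then xs ! i else 0)"
  have im: "s ` {..<m} = S"
  proof -
    have "s ` {..<m} = (\<lambda>i. xs ! i) ` {..<length xs}" using xs(2) unfolding s_def by auto
    also have "\<dots> = set xs" by (auto simp: in_set_conv_nth)
    finally show ?thesis using xs(3) by simp
  qed
  have "s \<in> SEL m c"
    unfolding SEL_def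
  proof (intro CollectI conjI allI impI)
    fix i j assume "i < j" "j < m"
    then show "s i < s j" using xs(1,2) unfolding s_def by (auto simp: sorted_wrt_iff_nth_less)
  next
    fix i assume "i < m"
    then have "s i \<in> S" using im by blast
    then show "s i < c" using assms(3) by auto
  next
    fix i assume "m \<le> i" then show "s i = 0" unfolding s_def by simp
  qed
  then show ?thesis using im by blast
qed

definition normsel :: "nat \<Rightarrow> (nat \<Rightarrow> nat) \<Rightarrow> (nat \<Rightarrow> nat)" where
  "normsel m s = (\<lambda>i. if i < m then s i else 0)"

lemma normsel_SEL: "s \<in> sel m c \<Longrightarrow> normsel m s \<in> SEL m c"
  unfolding sel_def SEL_def normsel_def by auto

lemma strict_inc_inj: fixes s :: "nat \<Rightarrow> nat" shows "\<forall>i j. i < j \<longrightarrow> j < m \<longrightarrow> s i < s j \<Longrightarrow> inj_on s {..<m}"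
  by (metis inj_onI lessThan_iff less_irrefl linorder_neqE_nat)

lemma strict_inc_less_iff:
  fixes s :: "nat \<Rightarrow> nat"
  assumes "\<forall>i j. i < j \<longrightarrow> j < m \<longrightarrow> s i < s j" "i < m" "j < m"
  shows "s i < s j \<longleftrightarrow> i < j"
proof
  assume "s i < s j"
  show "i < j"
  proof (rule ccontr)
    assume "\<not> i < j"
    then have "j < i \<or> j = i" by auto
    then show False using assms \<open>s i < s j\<close> by (metis less_asym less_irrefl)
  qed
qed (use assms in auto)

lemma det_sq_expand:
  fixes A B :: rmat
  shows "det_sq m (\<lambda>i j. \<Sum>l<c. A i l * B l j) =
   (\<Sum>g\<in>PiE {..<m} (\<lambda>_. {..<c}). (\<Prod>i<m. A i (g i)) * det_sq m (\<lambda>i j. B (g i) j))"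
proof -
  let ?P = "{p. p permutes {..<m}}"
  let ?F = "PiE {..<m} (\<lambda>_. {..<c})"
  have "det_sq m (\<lambda>i j. \<Sum>l<c. A i l * B l j) =
     (\<Sum>p\<in>?P. of_int (sign p) * (\<Sum>g\<in>?F. \<Prod>i<m. A i (g i) * B (g i) (p i)))"
    unfolding det_sq_def
    by (intro sum.cong refl arg_cong2[where f="(*)"] prod_sum_PiE) auto
  also have "\<dots> = (\<Sum>p\<in>?P. \<Sum>g\<in>?F. (\<Prod>i<m. A i (g i)) * (of_int (sign p) * (\<Prod>i<m. B (g i) (p i))))"
    by (simp add: sum_distrib_left prod.distrib mult_ac)
  also have "\<dots> = (\<Sum>g\<in>?F. \<Sum>p\<in>?P. (\<Prod>i<m. A i (g i)) * (of_int (sign p) * (\<Prod>i<m. B (g i) (p i))))"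
    by (rule sum.swap)
  also have "\<dots> = (\<Sum>g\<in>?F. (\<Prod>i<m. A i (g i)) * det_sq m (\<lambda>i j. B (g i) j))"
    unfolding det_sq_def by (simp add: sum_distrib_left)
  finally show ?thesis .
qed

theorem cauchy_binet:
  fixes A B :: rmat
  shows "det_sq m (\<lambda>i j. \<Sum>l<c. A i l * B l j) =
   (\<Sum>s\<in>SEL m c. det_sq m (\<lambda>i j. A i (s j)) * det_sq m (\<lambda>i j. B (s i) j))"
proof -
  let ?P = "{p. p permutes {..<m}}"
  let ?F = "PiE {..<m} (\<lambda>_. {..<c})"
  let ?Fi = "{g\<in>?F. inj_on g {..<m}}"
  define h where "h g = (\<Prod>i<m. A i (g i)) * det_sq m (\<lambda>i j. B (g i) j)" for g
  have hcong: "h g = h g'" if "\<And>i. i < m \<Longrightarrow> g i = g' i" for g g'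
    unfolding h_def using that by (auto intro!: prod.cong det_sq_cong arg_cong2[where f="(*)"])
  have "det_sq m (\<lambda>i j. \<Sum>l<c. A i l * B l j) = (\<Sum>g\<in>?F. h g)"
    unfolding det_sq_expand h_def ..
  also have "\<dots> = (\<Sum>g\<in>?Fi. h g)"
  proof (rule sum.mono_neutral_right)
    show "finite ?F" by (auto intro!: finite_PiE)
    show "?Fi \<subseteq> ?F" by auto
    show "\<forall>g\<in>?F - ?Fi. h g = 0"
    proof
      fix g assume "g \<in> ?F - ?Fi"
      then obtain i j where ij: "i < m" "j < m" "i \<noteq> j" "g i = g j"
        by (auto simp: inj_on_def)
      have "det_sq m (\<lambda>i j. B (g i) j) = 0"
        by (rule det_sq_equal_rows[OF ij(3,1,2)]) (simp add: ij(4))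
      then show "h g = 0" unfolding h_def by simp
    qed
  qed
  also have "\<dots> = (\<Sum>x\<in>SEL m c \<times> ?P. h (restrict (fst x \<circ> snd x) {..<m}))"
  proof (rule sum.reindex_cong)
    show "inj_on (\<lambda>x. restrict (fst x \<circ> snd x) {..<m}) (SEL m c \<times> ?P)"
    proof (rule inj_onI)
      fix x y assume x: "x \<in> SEL m c \<times> ?P" and y: "y \<in> SEL m c \<times> ?P"
        and eq0: "restrict (fst x \<circ> snd x) {..<m} = restrict (fst y \<circ> snd y) {..<m}"
      obtain s p s' p' where xy: "x = (s, p)" "y = (s', p')" by (cases x, cases y) auto
      have s: "s \<in> SEL m c" and p: "p permutes {..<m}" and s': "s' \<in> SEL m c" and p': "p' permutes {..<m}"
        using x y xy by auto
      have eq: "restrict (s \<circ> p) {..<m} = restrict (s' \<circ> p') {..<m}" using eq0 xy by simp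
      have eq': "s (p i) = s' (p' i)" if "i < m" for i
        using fun_cong[OF eq, of i] that by simp
      have si: "\<forall>i j. i < j \<longrightarrow> j < m \<longrightarrow> s i < s j" "\<forall>i j. i < j \<longrightarrow> j < m \<longrightarrow> s' i < s' j"
        using s s' unfolding SEL_def by auto
      have "s ` {..<m} = s ` (p ` {..<m})" using p by (simp add: permutes_image)
      also have "\<dots> = s' ` (p' ` {..<m})" using eq' by (auto simp: image_iff)
      also have "\<dots> = s' ` {..<m}" using p' by (simp add: permutes_image)
      finally have "s ` {..<m} = s' ` {..<m}" .
      then have ss: "i < m \<Longrightarrow> s i = s' i" for i using strict_inc_unique[OF si] by blast
      then have "s = s'" using s s' unfolding SEL_def by (auto simp: fun_eq_iff) (metis not_le)
      moreover have "p = p'"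
      proof
        fix i show "p i = p' i"
        proof (cases "i < m")
          case True
          then have "p i < m" "p' i < m" using p p' permutes_in_image by fastforce+
          moreover have "s (p i) = s (p' i)" using eq'[OF True] ss \<open>p' i < m\<close> by simp
          ultimately show ?thesis using strict_inc_inj[OF si(1)] by (auto dest: inj_onD)
        next
          case False then show ?thesis using p p' by (simp add: permutes_not_in)
        qed
      qed
      ultimately show "x = y" using xy by simp
    qed
  next
    have "(\<lambda>x. restrict (fst x \<circ> snd x) {..<m}) ` (SEL m c \<times> ?P) = ?Fi"
    proof
      show "(\<lambda>x. restrict (fst x \<circ> snd x) {..<m}) ` (SEL m c \<times> ?P) \<subseteq> ?Fi"
      proof (rule image_subsetI)
        fix x assume x: "x \<in> SEL m c \<times> ?P"
        obtain s p where xy: "x = (s, p)" by (cases x)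
        have s: "s \<in> SEL m c" and p: "p permutes {..<m}" using x xy by auto
        have pi: "i < m \<Longrightarrow> p i < m" for i using p permutes_in_image by fastforce
        have "restrict (s \<circ> p) {..<m} \<in> ?F" using s pi unfolding SEL_def by auto
        moreover have "inj_on (s \<circ> p) {..<m}"
        proof (rule comp_inj_on)
          show "inj_on p {..<m}" using p by (meson permutes_inj inj_on_subset subset_UNIV)
          show "inj_on s (p ` {..<m})" using p strict_inc_inj[of m s] s unfolding SEL_def
            by (simp add: permutes_image)
        qed
        moreover have "inj_on (restrict (s \<circ> p) {..<m}) {..<m}"
          using \<open>inj_on (s \<circ> p) {..<m}\<close> by (simp add: inj_on_def)
        ultimately show "restrict (fst x \<circ> snd x) {..<m} \<in> ?Fi" using xy by simp
      qed
    next
      show "?Fi \<subseteq> (\<lambda>x. restrict (fst x \<circ> snd x) {..<m}) ` (SEL m c \<times> ?P)"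
      proof
        fix g assume g: "g \<in> ?Fi"
        have gc: "g ` {..<m} \<subseteq> {..<c}" using g by auto
        have cg: "card (g ` {..<m}) = m" using g by (simp add: card_image)
        obtain s where s: "s \<in> SEL m c" "s ` {..<m} = g ` {..<m}"
          using strict_inc_exists[OF _ cg gc] by auto
        have si: "\<forall>i j. i < j \<longrightarrow> j < m \<longrightarrow> s i < s j" using s(1) unfolding SEL_def by auto
        define p where "p i = (if i < m then inv_into {..<m} s (g i) else i)" for i
        have ps: "i < m \<Longrightarrow> s (p i) = g i" for i
          unfolding p_def using s(2) by (auto intro!: f_inv_into_f)
        have pm: "i < m \<Longrightarrow> p i < m" for i
        proof -
          assume i: "i < m"
          then have "g i \<in> s ` {..<m}" using s(2) by blast
          then have "inv_into {..<m} s (g i) \<in> {..<m}" by (rule inv_into_into)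
          then show "p i < m" using i unfolding p_def by simp
        qed
        have pinj: "inj_on p {..<m}"
        proof (rule inj_onI)
          fix i j assume "i \<in> {..<m}" "j \<in> {..<m}" "p i = p j"
          then have "g i = g j" using ps by (metis lessThan_iff)
          then show "i = j" using g \<open>i \<in> {..<m}\<close> \<open>j \<in> {..<m}\<close> by (auto dest: inj_onD)
        qed
        have "p ` {..<m} = {..<m}"
          by (rule endo_inj_surj) (use pm pinj in auto)
        then have "bij_betw p {..<m} {..<m}" using pinj by (simp add: bij_betw_def)
        then have pp: "p permutes {..<m}"
          by (rule bij_imp_permutes) (simp add: p_def)
        have "restrict (s \<circ> p) {..<m} = g"
          using g ps by (auto simp: fun_eq_iff PiE_def extensional_def)
        then show "g \<in> (\<lambda>x. restrict (fst x \<circ> snd x) {..<m}) ` (SEL m c \<times> ?P)"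
          using s(1) pp by (auto intro!: image_eqI[where x="(s, p)"])
      qed
    qed
    then show "?Fi = (\<lambda>x. restrict (fst x \<circ> snd x) {..<m}) ` (SEL m c \<times> ?P)" by simp
  next
    fix x assume "x \<in> SEL m c \<times> ?P"
    show "h (restrict (fst x \<circ> snd x) {..<m}) = h (restrict (fst x \<circ> snd x) {..<m})" ..
  qed
  also have "\<dots> = (\<Sum>x\<in>SEL m c \<times> ?P. h (fst x \<circ> snd x))"
    by (rule sum.cong) (auto intro!: hcong)
  also have "\<dots> = (\<Sum>s\<in>SEL m c. \<Sum>p\<in>?P. h (s \<circ> p))"
    by (simp add: sum.cartesian_product split_def)
  also have "\<dots> = (\<Sum>s\<in>SEL m c. det_sq m (\<lambda>i j. A i (s j)) * det_sq m (\<lambda>i j. B (s i) j))"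
  proof (rule sum.cong[OF refl])
    fix s
    have "(\<Sum>p\<in>?P. h (s \<circ> p)) =
       (\<Sum>p\<in>?P. (of_int (sign p) * (\<Prod>i<m. A i (s (p i)))) * det_sq m (\<lambda>i j. B (s i) j))"
    proof (rule sum.cong[OF refl])
      fix p assume "p \<in> ?P"
      then have "det_sq m (\<lambda>i j. B (s (p i)) j) = of_int (sign p) * det_sq m (\<lambda>i j. B (s i) j)"
        using det_sq_permute_rows[of p m "\<lambda>i j. B (s i) j"] by simp
      then show "h (s \<circ> p) = (of_int (sign p) * (\<Prod>i<m. A i (s (p i)))) * det_sq m (\<lambda>i j. B (s i) j)"
        unfolding h_def by (simp add: mult_ac)
    qed
    also have "\<dots> = det_sq m (\<lambda>i j. A i (s j)) * det_sq m (\<lambda>i j. B (s i) j)"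
      unfolding det_sq_def[of m "\<lambda>i j. A i (s j)"] by (simp add: sum_distrib_right)
    finally show "(\<Sum>p\<in>?P. h (s \<circ> p)) = det_sq m (\<lambda>i j. A i (s j)) * det_sq m (\<lambda>i j. B (s i) j)" .
  qed
  finally show ?thesis .
qed

lemma indep_imp_minor:
  fixes X :: rmat
  assumes indep: "\<And>v. \<forall>j<c. (\<Sum>i<m. v i * X i j) = 0 \<Longrightarrow> \<forall>i<m. v i = 0"
  shows "\<exists>t\<in>SEL m c. det_sq m (\<lambda>i j. X i (t j)) \<noteq> 0"
proof -
  define G where "G = (\<lambda>i j. \<Sum>l<c. X i l * X j l)"
  have detG: "det_sq m G \<noteq> 0"
  proof
    assume "det_sq m G = 0"
    then obtain w j0 where w: "\<forall>i<m. (\<Sum>j<m. G i j * w j) = 0" and j0: "j0 < m" "w j0 \<noteq> 0"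
      using det_sq_zero_kernel by blast
    define u where "u l = (\<Sum>i<m. w i * X i l)" for l
    have "(\<Sum>l<c. u l * u l) = (\<Sum>l<c. \<Sum>i<m. \<Sum>j<m. w i * X i l * (w j * X j l))"
      unfolding u_def by (simp add: sum_product)
    also have "\<dots> = (\<Sum>i<m. \<Sum>l<c. \<Sum>j<m. w i * X i l * (w j * X j l))"
      by (rule sum.swap)
    also have "\<dots> = (\<Sum>i<m. \<Sum>j<m. \<Sum>l<c. w i * X i l * (w j * X j l))"
      by (rule sum.cong[OF refl], rule sum.swap)
    also have "\<dots> = (\<Sum>i<m. w i * (\<Sum>j<m. G i j * w j))"
      unfolding G_def by (simp add: sum_distrib_left sum_distrib_right mult_ac)
    also have "\<dots> = 0" using w by simp
    finally have "(\<Sum>l<c. u l * u l) = 0" .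
    then have "\<forall>l\<in>{..<c}. u l * u l = 0"
      by (subst sum_nonneg_eq_0_iff[symmetric]) auto
    then have "\<forall>j<c. (\<Sum>i<m. w i * X i j) = 0" unfolding u_def by auto
    then have "\<forall>i<m. w i = 0" by (rule indep)
    then show False using j0 by auto
  qed
  have "det_sq m G = (\<Sum>t\<in>SEL m c. det_sq m (\<lambda>i j. X i (t j)) * det_sq m (\<lambda>i j. X j (t i)))"
    unfolding G_def by (rule cauchy_binet)
  also have "\<dots> = (\<Sum>t\<in>SEL m c. det_sq m (\<lambda>i j. X i (t j)) * det_sq m (\<lambda>i j. X i (t j)))"
  proof (rule sum.cong[OF refl])
    fix t
    show "det_sq m (\<lambda>i j. X i (t j)) * det_sq m (\<lambda>i j. X j (t i)) =
          det_sq m (\<lambda>i j. X i (t j)) * det_sq m (\<lambda>i j. X i (t j))"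
      using det_sq_transpose[of m "\<lambda>i j. X i (t j)"] by simp
  qed
  finally have "(\<Sum>t\<in>SEL m c. det_sq m (\<lambda>i j. X i (t j)) * det_sq m (\<lambda>i j. X i (t j))) \<noteq> 0"
    using detG by simp
  then obtain t where "t \<in> SEL m c" "det_sq m (\<lambda>i j. X i (t j)) * det_sq m (\<lambda>i j. X i (t j)) \<noteq> 0"
    using sum.neutral by (metis (no_types, lifting))
  then show ?thesis by auto
qed

lemma dep_of_minors_zero:
  fixes X :: rmat
  assumes "\<forall>t\<in>SEL m c. det_sq m (\<lambda>i j. X i (t j)) = 0"
  shows "\<exists>v. (\<forall>j<c. (\<Sum>i<m. v i * X i j) = 0) \<and> (\<exists>i<m. v i \<noteq> 0)"
  using indep_imp_minor[where c=c and m=m and X=X] assms by blast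

definition ins :: "nat \<Rightarrow> nat \<Rightarrow> nat" where "ins p j = (if j < p then j else Suc j)"

definition Ahat :: "nat \<Rightarrow> rmat \<Rightarrow> nat \<Rightarrow> nat \<Rightarrow> rmat" where
  "Ahat r A t1 t2 = (\<lambda>i l. if i < r then A i l else if i = r then (if l = t1 then 1 else 0)
                           else (if l = t2 then 1 else 0))"

lemma ins_mono: "i < j \<Longrightarrow> ins p i < ins p j"
  unfolding ins_def by auto

lemma ins_range:
  assumes "p1 < p2" "p2 < Suc (Suc r)"
  shows "(\<lambda>j. ins p2 (ins p1 j)) ` {..<r} = {..<Suc (Suc r)} - {p1, p2}"
proof
  show "(\<lambda>j. ins p2 (ins p1 j)) ` {..<r} \<subseteq> {..<Suc (Suc r)} - {p1, p2}"
    using assms unfolding ins_def by auto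
next
  show "{..<Suc (Suc r)} - {p1, p2} \<subseteq> (\<lambda>j. ins p2 (ins p1 j)) ` {..<r}"
  proof
    fix x assume x: "x \<in> {..<Suc (Suc r)} - {p1, p2}"
    define y where "y = (if x < p2 then x else x - 1)"
    define j where "j = (if y < p1 then y else y - 1)"
    have "ins p1 j = y" "ins p2 y = x" "j < r"
      using x assms unfolding y_def j_def ins_def by auto
    then show "x \<in> (\<lambda>j. ins p2 (ins p1 j)) ` {..<r}" by (metis imageI lessThan_iff)
  qed
qed

lemma pos_gap:
  fixes I :: "nat \<Rightarrow> nat"
  assumes si: "\<forall>i j. i < j \<longrightarrow> j < M \<longrightarrow> I i < I j"
    and p: "p1 < p2" "p2 < M"
    and fill: "\<forall>v. I p1 < v \<longrightarrow> v < I p2 \<longrightarrow> v \<in> I ` {..<M}"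
  shows "I p2 - I p1 = p2 - p1"
proof -
  have "\<forall>q. p1 + q \<le> p2 \<longrightarrow> I (p1 + q) = I p1 + q"
  proof
    fix q show "p1 + q \<le> p2 \<longrightarrow> I (p1 + q) = I p1 + q"
    proof (induction q)
      case 0 then show ?case by simp
    next
      case (Suc q)
      show ?case
      proof
        assume le: "p1 + Suc q \<le> p2"
        then have IH: "I (p1 + q) = I p1 + q" using Suc by simp
        have lt: "I (p1 + q) < I (p1 + Suc q)" using si le p by auto
        have up: "I (p1 + Suc q) \<le> I p2"
          using si le p by (cases "p1 + Suc q = p2") (auto simp: less_imp_le)
        show "I (p1 + Suc q) = I p1 + Suc q"
        proof (rule ccontr)
          assume ne: "I (p1 + Suc q) \<noteq> I p1 + Suc q"
          define v where "v = I p1 + Suc q"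
          have v1: "I p1 < v" "v < I p2" using lt IH ne up unfolding v_def by auto
          then obtain x where x: "x < M" "v = I x" using fill by blast
          have "I (p1 + q) < I x" "I x < I (p1 + Suc q)" using lt IH ne x unfolding v_def by auto
          moreover have "p1 + q < M" "p1 + Suc q < M" using le p by auto
          ultimately have "p1 + q < x" "x < p1 + Suc q"
            using strict_inc_less_iff[OF si] x(1) by blast+
          then show False by simp
        qed
      qed
    qed
  qed
  then have "I (p1 + (p2 - p1)) = I p1 + (p2 - p1)" 
  proof -
    assume h: "\<forall>q. p1 + q \<le> p2 \<longrightarrow> I (p1 + q) = I p1 + q"
    have "p1 + (p2 - p1) \<le> p2" using p by simp
    then show ?thesis using h by blast
  qed
  moreover have "p1 + (p2 - p1) = p2" using p by simp
  ultimately show ?thesis by simp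
qed

lemma SEL_inc: "s \<in> SEL m c \<Longrightarrow> \<forall>i j. i < j \<longrightarrow> j < m \<longrightarrow> s i < s j"
  unfolding SEL_def by auto

lemma SEL_bound: "s \<in> SEL m c \<Longrightarrow> i < m \<Longrightarrow> s i < c"
  unfolding SEL_def by auto

lemma ahat_zero:
  assumes "t1 \<notin> I ` {..<Suc (Suc r)} \<or> t2 \<notin> I ` {..<Suc (Suc r)}"
  shows "det_sq (Suc (Suc r)) (\<lambda>i j. Ahat r A t1 t2 i (I j)) = 0"
proof (cases "t1 \<notin> I ` {..<Suc (Suc r)}")
  case True
  show ?thesis
    by (rule det_sq_zero_row[where i=r]) (use True in \<open>auto simp: Ahat_def\<close>)
next
  case False
  then have "t2 \<notin> I ` {..<Suc (Suc r)}" using assms by blast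
  then show ?thesis
    by (intro det_sq_zero_row[where i="Suc r"]) (auto simp: Ahat_def)
qed

lemma ahat_expand:
  assumes I: "I \<in> SEL (Suc (Suc r)) n" and p: "p1 < p2" "p2 < Suc (Suc r)" "I p1 = t1" "I p2 = t2"
  shows "det_sq (Suc (Suc r)) (\<lambda>i j. Ahat r A t1 t2 i (I j)) =
         (-1)^(p1+p2+1) * det_sq r (\<lambda>i j. A i (I (ins p2 (ins p1 j))))"
proof -
  define X where "X = (\<lambda>i j. Ahat r A t1 t2 i (I j))"
  have si: "\<forall>i j. i < j \<longrightarrow> j < Suc (Suc r) \<longrightarrow> I i < I j" using SEL_inc[OF I] .
  have inj: "inj_on I {..<Suc (Suc r)}" by (rule strict_inc_inj[OF si])
  have s1: "det_sq (Suc (Suc r)) X = (-1)^(Suc r + p2) * det_sq (Suc r) (\<lambda>i j. X i (ins p2 j))"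
  proof -
    have "det_sq (Suc (Suc r)) X = (-1)^(Suc r + p2) * det_sq (Suc r) (\<lambda>i j. X i (if j < p2 then j else Suc j))"
    proof (rule det_sq_last_row_unit[OF p(2)])
      fix j assume j: "j < Suc (Suc r)"
      have "I j = t2 \<longleftrightarrow> j = p2" using inj j p(2,4) by (auto dest: inj_onD)
      then show "X (Suc r) j = (if j = p2 then 1 else 0)" unfolding X_def Ahat_def by simp
    qed
    then show ?thesis unfolding ins_def .
  qed
  have s2: "det_sq (Suc r) (\<lambda>i j. X i (ins p2 j)) = (-1)^(r + p1) * det_sq r (\<lambda>i j. X i (ins p2 (ins p1 j)))"
  proof -
    have "p1 < Suc r" using p by simp
    have "det_sq (Suc r) (\<lambda>i j. X i (ins p2 j)) = (-1)^(r + p1) * det_sq r (\<lambda>i j. X i (ins p2 (if j < p1 then j else Suc j)))"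
    proof (rule det_sq_last_row_unit[OF \<open>p1 < Suc r\<close>])
      fix j assume j: "j < Suc r"
      have "ins p2 j < Suc (Suc r)" using j unfolding ins_def by auto
      then have "I (ins p2 j) = t1 \<longleftrightarrow> ins p2 j = p1" using inj p(1,2,3) by (auto dest: inj_onD)
      also have "\<dots> \<longleftrightarrow> j = p1" using p(1) unfolding ins_def by auto
      finally show "X r (ins p2 j) = (if j = p1 then 1 else 0)" unfolding X_def Ahat_def by simp
    qed
    then show ?thesis unfolding ins_def .
  qed
  have s3: "det_sq r (\<lambda>i j. X i (ins p2 (ins p1 j))) = det_sq r (\<lambda>i j. A i (I (ins p2 (ins p1 j))))"
    by (rule det_sq_cong) (simp add: X_def Ahat_def)
  have sg: "(-1::real)^(Suc r + p2) * (-1)^(r + p1) = (-1)^(p1+p2+1)"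
  proof -
    have "(-1::real)^(Suc r + p2) * (-1)^(r + p1) = (-1)^(2*r + (p1+p2+1))"
    proof -
      have "Suc r + p2 + (r + p1) = 2*r + (p1+p2+1)" by simp
      then show ?thesis by (metis power_add)
    qed
    also have "\<dots> = (-1)^(p1+p2+1)" by (simp add: power_add power_mult)
    finally show ?thesis .
  qed
  have "det_sq (Suc (Suc r)) (\<lambda>i j. Ahat r A t1 t2 i (I j)) = det_sq (Suc (Suc r)) X"
    unfolding X_def ..
  also have "\<dots> = ((-1)^(Suc r + p2) * (-1)^(r + p1)) * det_sq r (\<lambda>i j. A i (I (ins p2 (ins p1 j))))"
    unfolding s1 s2 s3 by (rule mult.assoc[symmetric])
  also have "\<dots> = (-1)^(p1+p2+1) * det_sq r (\<lambda>i j. A i (I (ins p2 (ins p1 j))))"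
    unfolding sg ..
  finally show ?thesis .
qed

lemma ins_J_sel:
  assumes I: "I \<in> SEL (Suc (Suc r)) n" and p: "p1 < p2" "p2 < Suc (Suc r)"
  shows "(\<lambda>j. I (ins p2 (ins p1 j))) \<in> sel r n"
    and "(\<lambda>j. I (ins p2 (ins p1 j))) ` {..<r} = I ` ({..<Suc (Suc r)} - {p1, p2})"
proof -
  have si: "\<forall>i j. i < j \<longrightarrow> j < Suc (Suc r) \<longrightarrow> I i < I j" using SEL_inc[OF I] .
  have rg: "(\<lambda>j. ins p2 (ins p1 j)) ` {..<r} = {..<Suc (Suc r)} - {p1, p2}" by (rule ins_range[OF p])
  have lt: "j < r \<Longrightarrow> ins p2 (ins p1 j) < Suc (Suc r)" for j using rg by blast
  show "(\<lambda>j. I (ins p2 (ins p1 j))) \<in> sel r n"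
    unfolding sel_def
  proof (intro CollectI conjI allI impI)
    fix i j assume "i < j" "j < r"
    then have "ins p2 (ins p1 i) < ins p2 (ins p1 j)" by (intro ins_mono)
    moreover have "ins p2 (ins p1 j) < Suc (Suc r)" using lt \<open>j < r\<close> by blast
    ultimately show "I (ins p2 (ins p1 i)) < I (ins p2 (ins p1 j))"
      using si by blast
  next
    fix i assume "i < r" then have "ins p2 (ins p1 i) < Suc (Suc r)" using lt by blast
    then show "I (ins p2 (ins p1 i)) < n" using SEL_bound[OF I] by blast
  qed
  show "(\<lambda>j. I (ins p2 (ins p1 j))) ` {..<r} = I ` ({..<Suc (Suc r)} - {p1, p2})"
  proof -
    have "(\<lambda>j. I (ins p2 (ins p1 j))) ` {..<r} = I ` ((\<lambda>j. ins p2 (ins p1 j)) ` {..<r})"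
      by (rule image_image[symmetric])
    then show ?thesis using rg by simp
  qed
qed

lemma amp_full_rank:
  fixes A Z :: rmat and r n :: nat
  assumes n: "Suc (Suc r) \<le> n"
    and Apos: "\<forall>s\<in>sel r n. max_minor r A s \<ge> 0"
    and Arank: "\<exists>s\<in>sel r n. max_minor r A s \<noteq> 0"
    and Zpos: "\<forall>s\<in>sel (Suc (Suc r)) n. det_sq (Suc (Suc r)) (\<lambda>i j. Z (s i) j) > 0"
  shows "\<exists>t\<in>sel r (Suc (Suc r)). max_minor r (mat_mul n A Z) t \<noteq> 0"
proof (rule ccontr)
  let ?M = "Suc (Suc r)"
  define X where "X = mat_mul n A Z"
  assume "\<not> ?thesis"
  then have H: "\<forall>t\<in>SEL r ?M. det_sq r (\<lambda>i j. X i (t j)) = 0"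
    using SEL_sel unfolding max_minor_def X_def by blast
  obtain v i0 where v: "\<forall>j<?M. (\<Sum>i<r. v i * X i j) = 0" and i0: "i0 < r" "v i0 \<noteq> 0"
    using dep_of_minors_zero[OF H] by blast
  have Nz: "det_sq ?M (\<lambda>i j. \<Sum>l<n. Ahat r A t1 t2 i l * Z l j) = 0" if t: "t1 < n" "t2 < n" for t1 t2
  proof -
    have kern: "(\<Sum>i<?M. (if i < r then v i else 0) * (\<Sum>l<n. Ahat r A t1 t2 i l * Z l j)) = 0"
      if j: "j < ?M" for j
    proof -
    have eq: "(\<Sum>i<r. (if i < r then v i else 0) * (\<Sum>l<n. Ahat r A t1 t2 i l * Z l j)) = (\<Sum>i<r. v i * X i j)"
      by (rule sum.cong) (auto simp: Ahat_def X_def mat_mul_def)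
    have "(\<Sum>i<?M. (if i < r then v i else 0) * (\<Sum>l<n. Ahat r A t1 t2 i l * Z l j)) =
          (\<Sum>i<r. (if i < r then v i else 0) * (\<Sum>l<n. Ahat r A t1 t2 i l * Z l j))"
      by simp
    then show ?thesis
      using eq v j by simp
    qed
    have a: "i0 < ?M" "(if i0 < r then v i0 else 0) \<noteq> 0" using i0 by auto
    show ?thesis by (rule det_sq_left_kernel[OF kern a])
  qed
  have CB: "det_sq ?M (\<lambda>i j. \<Sum>l<n. Ahat r A t1 t2 i l * Z l j) =
     (\<Sum>I\<in>SEL ?M n. det_sq ?M (\<lambda>i j. Ahat r A t1 t2 i (I j)) * det_sq ?M (\<lambda>i j. Z (I i) j))" for t1 t2
    by (rule cauchy_binet)
  have Zp: "det_sq ?M (\<lambda>i j. Z (I i) j) > 0" if "I \<in> SEL ?M n" for I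
    using Zpos SEL_sel[OF that] by blast
  have claim: "\<forall>t1 t2. t1 < t2 \<longrightarrow> t2 < n \<longrightarrow> t2 - t1 = d \<longrightarrow>
      (\<forall>J\<in>sel r n. max_minor r A J \<noteq> 0 \<longrightarrow> t1 \<in> J ` {..<r} \<or> t2 \<in> J ` {..<r})" for d
  proof (induction d rule: less_induct)
    case (less d)
    show ?case
    proof (intro allI impI ballI)
      fix t1 t2 J0 assume t: "t1 < t2" "t2 < n" "t2 - t1 = d" and J0: "J0 \<in> sel r n" "max_minor r A J0 \<noteq> 0"
      show "t1 \<in> J0 ` {..<r} \<or> t2 \<in> J0 ` {..<r}"
      proof (rule ccontr)
        assume "\<not> (t1 \<in> J0 ` {..<r} \<or> t2 \<in> J0 ` {..<r})"
        then have nt: "t1 \<notin> J0 ` {..<r}" "t2 \<notin> J0 ` {..<r}" by auto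
        define e :: real where "e = (-1)^(t2 - t1 + 1)"
        have e0: "e \<noteq> 0" unfolding e_def by simp
        define Ah where "Ah = Ahat r A t1 t2"
        have nonneg: "0 \<le> e * det_sq ?M (\<lambda>i j. Ah i (I j))" if I: "I \<in> SEL ?M n" for I
        proof (cases "t1 \<in> I ` {..<?M} \<and> t2 \<in> I ` {..<?M}")
          case False
          then have "det_sq ?M (\<lambda>i j. Ah i (I j)) = 0" unfolding Ah_def by (intro ahat_zero) auto
          then show ?thesis by simp
        next
          case True
          then obtain p1 p2 where p: "p1 < ?M" "p2 < ?M" "I p1 = t1" "I p2 = t2" by blast
          have si: "\<forall>i j. i < j \<longrightarrow> j < ?M \<longrightarrow> I i < I j" using SEL_inc[OF I] .
          have p12: "p1 < p2" using strict_inc_less_iff[OF si p(1) p(2)] p t(1) by simp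
          define J where "J = (\<lambda>j. I (ins p2 (ins p1 j)))"
          have Jsel: "J \<in> sel r n" and Jim: "J ` {..<r} = I ` ({..<?M} - {p1,p2})"
            using ins_J_sel[OF I p12 p(2)] unfolding J_def by auto
          have exp: "det_sq ?M (\<lambda>i j. Ah i (I j)) = (-1)^(p1+p2+1) * max_minor r A J"
            unfolding Ah_def max_minor_def J_def by (rule ahat_expand[OF I p12 p(2) p(3) p(4)])
          have mJ: "max_minor r A J \<ge> 0" using Apos Jsel by blast
          show ?thesis
          proof (cases "max_minor r A J = 0")
            case True then show ?thesis using exp by simp
          next
            case False
            have inj: "inj_on I {..<?M}" by (rule strict_inc_inj[OF si])
            have t1J: "t1 \<notin> J ` {..<r}"
            proof
              assume "t1 \<in> J ` {..<r}"
              then obtain x where x: "x \<in> {..<?M} - {p1,p2}" "I x = t1" using Jim by auto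
              then have "x = p1" using inj p by (auto dest: inj_onD)
              then show False using x by auto
            qed
            have fill: "\<forall>w. I p1 < w \<longrightarrow> w < I p2 \<longrightarrow> w \<in> I ` {..<?M}"
            proof (intro allI impI)
              fix w assume w: "I p1 < w" "w < I p2"
              have lt: "w - t1 < d" using w p t by auto
              have "t1 < w" "w < n" using w p t by auto
              then have "t1 \<in> J ` {..<r} \<or> w \<in> J ` {..<r}"
                using less.IH[OF lt] Jsel False by blast
              then have "w \<in> J ` {..<r}" using t1J by blast
              then show "w \<in> I ` {..<?M}" using Jim by auto
            qed
            have gap: "I p2 - I p1 = p2 - p1" by (rule pos_gap[OF si p12 p(2) fill])
            then have g: "t2 - t1 = p2 - p1" using p by simp
            have "e * (-1)^(p1+p2+1) = 1"
            proof -
              have "(t2 - t1 + 1) + (p1 + p2 + 1) = 2 * (p2 + 1)" using g p12 by simp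
              then have "e * (-1)^(p1+p2+1) = (-1::real)^(2 * (p2 + 1))"
                unfolding e_def by (metis power_add)
              also have "\<dots> = 1" by (simp add: power_mult)
              finally show ?thesis .
            qed
            then have "e * det_sq ?M (\<lambda>i j. Ah i (I j)) = max_minor r A J"
              unfolding exp by (simp add: mult.assoc[symmetric])
            then show ?thesis using mJ by simp
          qed
        qed
        have pos: "\<exists>I0\<in>SEL ?M n. det_sq ?M (\<lambda>i j. Ah i (I0 j)) \<noteq> 0"
        proof -
          define S where "S = insert t1 (insert t2 (J0 ` {..<r}))"
          have siJ: "\<forall>i j. i < j \<longrightarrow> j < r \<longrightarrow> J0 i < J0 j" using J0 unfolding sel_def by auto
          have cJ: "card (J0 ` {..<r}) = r" using strict_inc_inj[OF siJ] by (simp add: card_image)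
          have cS: "card S = ?M" using nt t(1) cJ unfolding S_def by simp
          have Ssub: "S \<subseteq> {..<n}" using J0 t unfolding S_def sel_def by auto
          have fS: "finite S" unfolding S_def by simp
          obtain I0 where I0: "I0 \<in> SEL ?M n" "I0 ` {..<?M} = S"
            using strict_inc_exists[OF fS cS Ssub] by blast
          have "t1 \<in> I0 ` {..<?M}" "t2 \<in> I0 ` {..<?M}" using I0(2) unfolding S_def by auto
          then obtain p1 p2 where p: "p1 < ?M" "p2 < ?M" "I0 p1 = t1" "I0 p2 = t2" by blast
          have si: "\<forall>i j. i < j \<longrightarrow> j < ?M \<longrightarrow> I0 i < I0 j" using SEL_inc[OF I0(1)] .
          have inj: "inj_on I0 {..<?M}" by (rule strict_inc_inj[OF si])
          have p12: "p1 < p2" using strict_inc_less_iff[OF si p(1) p(2)] p t(1) by simp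
          define J where "J = (\<lambda>j. I0 (ins p2 (ins p1 j)))"
          have Jsel: "J \<in> sel r n" and Jim: "J ` {..<r} = I0 ` ({..<?M} - {p1,p2})"
            using ins_J_sel[OF I0(1) p12 p(2)] unfolding J_def by auto
          have "I0 ` ({..<?M} - {p1,p2}) = I0 ` {..<?M} - I0 ` {p1,p2}"
            by (rule inj_on_image_set_diff[OF inj]) (use p in auto)
          also have "\<dots> = J0 ` {..<r}" using I0(2) p nt unfolding S_def by auto
          finally have JJ: "J ` {..<r} = J0 ` {..<r}" using Jim by simp
          have siJ': "\<forall>i j. i < j \<longrightarrow> j < r \<longrightarrow> J i < J j" using Jsel unfolding sel_def by auto
          have "max_minor r A J = max_minor r A J0"
            unfolding max_minor_def
            by (rule det_sq_cong) (metis strict_inc_unique[OF siJ' siJ JJ])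
          then have "max_minor r A J \<noteq> 0" using J0 by simp
          moreover have "det_sq ?M (\<lambda>i j. Ah i (I0 j)) = (-1)^(p1+p2+1) * max_minor r A J"
            unfolding Ah_def max_minor_def J_def by (rule ahat_expand[OF I0(1) p12 p(2) p(3) p(4)])
          ultimately have "det_sq ?M (\<lambda>i j. Ah i (I0 j)) \<noteq> 0" by simp
          then show ?thesis using I0(1) by blast
        qed
        then obtain I0 where I0: "I0 \<in> SEL ?M n" "det_sq ?M (\<lambda>i j. Ah i (I0 j)) \<noteq> 0" by blast
        have pos0: "0 < e * det_sq ?M (\<lambda>i j. Ah i (I0 j))"
          using nonneg[OF I0(1)] I0(2) e0 by (simp add: order_less_le)
        have "0 < (\<Sum>I\<in>SEL ?M n. (e * det_sq ?M (\<lambda>i j. Ah i (I j))) * det_sq ?M (\<lambda>i j. Z (I i) j))"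
        proof (rule sum_pos2[OF finite_SEL I0(1)])
          show "0 < e * det_sq ?M (\<lambda>i j. Ah i (I0 j)) * det_sq ?M (\<lambda>i j. Z (I0 i) j)"
            using pos0 Zp[OF I0(1)] by simp
        next
          fix I assume "I \<in> SEL ?M n"
          then show "0 \<le> e * det_sq ?M (\<lambda>i j. Ah i (I j)) * det_sq ?M (\<lambda>i j. Z (I i) j)"
            using nonneg Zp by (simp add: less_imp_le)
        qed
        also have "\<dots> = e * det_sq ?M (\<lambda>i j. \<Sum>l<n. Ah i l * Z l j)"
          unfolding Ah_def CB by (simp add: sum_distrib_left mult.assoc)
        also have "\<dots> = 0" using Nz t unfolding Ah_def by simp
        finally show False by simp
      qed
    qed
  qed
  obtain J0 where J0: "J0 \<in> sel r n" "max_minor r A J0 \<noteq> 0" using Arank by blast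
  have siJ: "\<forall>i j. i < j \<longrightarrow> j < r \<longrightarrow> J0 i < J0 j" using J0 unfolding sel_def by auto
  have cJ: "card (J0 ` {..<r}) = r" using strict_inc_inj[OF siJ] by (simp add: card_image)
  have Jsub: "J0 ` {..<r} \<subseteq> {..<n}" using J0 unfolding sel_def by auto
  define D where "D = {..<n} - J0 ` {..<r}"
  have cD: "card D = n - r" unfolding D_def using cJ Jsub by (simp add: card_Diff_subset)
  then have "D \<noteq> {}" using n by auto
  then obtain a where a: "a \<in> D" by blast
  have "card (D - {a}) \<ge> 1" using cD a n by (simp add: card_Diff_singleton)
  then have "D - {a} \<noteq> {}" by (metis card.empty not_one_le_zero)
  then obtain b where b: "b \<in> D" "b \<noteq> a" by blast
  define t1 where "t1 = min a b"
  define t2 where "t2 = max a b"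
  have tt: "t1 < t2" "t2 < n" "t1 \<notin> J0 ` {..<r}" "t2 \<notin> J0 ` {..<r}"
    using a b unfolding t1_def t2_def D_def by (auto simp: min_def max_def)
  show False using claim[of "t2 - t1"] tt J0 by blast
qed

lemma sum_swap_id:
  fixes a :: "nat \<Rightarrow> real" and B Z :: rmat
  shows "(\<Sum>l<n. (\<Sum>i<r. a i * B i l) * Z l j) = (\<Sum>i<r. a i * (\<Sum>l<n. B i l * Z l j))"
proof -
  have "(\<Sum>l<n. (\<Sum>i<r. a i * B i l) * Z l j) = (\<Sum>l<n. \<Sum>i<r. a i * (B i l * Z l j))"
    by (simp add: sum_distrib_right mult.assoc)
  also have "\<dots> = (\<Sum>i<r. \<Sum>l<n. a i * (B i l * Z l j))" by (rule sum.swap)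
  also have "\<dots> = (\<Sum>i<r. a i * (\<Sum>l<n. B i l * Z l j))" by (simp add: sum_distrib_left)
  finally show ?thesis .
qed

lemma rowspan_mul:
  fixes B Z :: rmat
  shows "rowspan r (\<lambda>i j. \<Sum>l<n. B i l * Z l j) = img n Z (rowspan r B)"
proof -
  have "{v. \<exists>a. v = (\<lambda>j. \<Sum>i<r. a i * (\<Sum>l<n. B i l * Z l j))} =
        (\<lambda>v j. \<Sum>i<n. v i * Z i j) ` {v. \<exists>a. v = (\<lambda>j. \<Sum>i<r. a i * B i j)}"
  proof (rule equalityI)
    show "{v. \<exists>a. v = (\<lambda>j. \<Sum>i<r. a i * (\<Sum>l<n. B i l * Z l j))} \<subseteq>
        (\<lambda>v j. \<Sum>i<n. v i * Z i j) ` {v. \<exists>a. v = (\<lambda>j. \<Sum>i<r. a i * B i j)}"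
    proof
      fix v assume "v \<in> {v. \<exists>a. v = (\<lambda>j. \<Sum>i<r. a i * (\<Sum>l<n. B i l * Z l j))}"
      then obtain a where a: "v = (\<lambda>j. \<Sum>i<r. a i * (\<Sum>l<n. B i l * Z l j))" by blast
      have "v = (\<lambda>u j. \<Sum>i<n. u i * Z i j) (\<lambda>j. \<Sum>i<r. a i * B i j)"
        unfolding a by (simp add: sum_swap_id)
      then show "v \<in> (\<lambda>v j. \<Sum>i<n. v i * Z i j) ` {v. \<exists>a. v = (\<lambda>j. \<Sum>i<r. a i * B i j)}"
        by (intro image_eqI[where x="\<lambda>j. \<Sum>i<r. a i * B i j"]) auto
    qed
  next
    show "(\<lambda>v j. \<Sum>i<n. v i * Z i j) ` {v. \<exists>a. v = (\<lambda>j. \<Sum>i<r. a i * B i j)} \<subseteq>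
          {v. \<exists>a. v = (\<lambda>j. \<Sum>i<r. a i * (\<Sum>l<n. B i l * Z l j))}"
    proof
      fix v assume "v \<in> (\<lambda>v j. \<Sum>i<n. v i * Z i j) ` {v. \<exists>a. v = (\<lambda>j. \<Sum>i<r. a i * B i j)}"
      then obtain a where a: "v = (\<lambda>j. \<Sum>l<n. (\<Sum>i<r. a i * B i l) * Z l j)" by blast
      then have "v = (\<lambda>j. \<Sum>i<r. a i * (\<Sum>l<n. B i l * Z l j))" by (simp add: sum_swap_id)
      then show "v \<in> {v. \<exists>a. v = (\<lambda>j. \<Sum>i<r. a i * (\<Sum>l<n. B i l * Z l j))}" by blast
    qed
  qed
  then show ?thesis unfolding rowspan_def img_def .
qed

lemma flag_mul: "flag_of k (mat_mul n A Z) = amp_map n Z (flag_of k A)"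
  unfolding flag_of_def amp_map_def lowerC_def mat_mul_def
  using rowspan_mul[where r=k and n=n and B="\<lambda>i j. A (i+2) j" and Z=Z]
        rowspan_mul[where r="k+2" and n=n and B=A and Z=Z] by simp

lemma row_in_rowspan:
  assumes "i < r" shows "(\<lambda>j. A i j) \<in> rowspan r A"
proof -
  have "(\<Sum>l<r. (if l = i then 1 else 0) * A l j) = A i j" for j
  proof -
    have "(\<Sum>l<r. (if l = i then 1 else 0) * A l j) = (\<Sum>l<r. if l = i then A l j else 0)"
      by (rule sum.cong) auto
    also have "\<dots> = A i j" using assms by (simp add: sum.delta')
    finally show ?thesis .
  qed
  then have "(\<lambda>j. A i j) = (\<lambda>j. \<Sum>l<r. (if l = i then 1 else 0) * A l j)" by simp
  then show ?thesis unfolding rowspan_def by (intro CollectI exI[of _ "\<lambda>l. if l = i then 1 else 0"])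
qed

lemma transfer_minor:
  assumes rs: "rowspan r A = rowspan r A'" and nz: "det_sq r (\<lambda>i j. mat_mul n A Z i (t j)) \<noteq> 0"
  shows "det_sq r (\<lambda>i j. mat_mul n A' Z i (t j)) \<noteq> 0"
proof -
  have "\<forall>i. i < r \<longrightarrow> (\<exists>a. (\<lambda>j. A i j) = (\<lambda>j. \<Sum>l<r. a l * A' l j))"
    using row_in_rowspan[of _ r A] rs unfolding rowspan_def by blast
  then obtain h where h: "\<forall>i. i < r \<longrightarrow> (\<lambda>j. A i j) = (\<lambda>j. \<Sum>l<r. h i l * A' l j)"
    by (subst (asm) choice_iff') blast
  have eq: "mat_mul n A Z i c = (\<Sum>l<r. h i l * mat_mul n A' Z l c)" if "i < r" for i c
  proof -
    have "mat_mul n A Z i c = (\<Sum>q<n. (\<Sum>l<r. h i l * A' l q) * Z q c)"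
      unfolding mat_mul_def using h that by (metis (no_types, lifting))
    also have "\<dots> = (\<Sum>l<r. h i l * mat_mul n A' Z l c)"
      unfolding mat_mul_def by (rule sum_swap_id)
    finally show ?thesis .
  qed
  have "det_sq r (\<lambda>i j. mat_mul n A Z i (t j)) = det_sq r (\<lambda>i j. \<Sum>l<r. h i l * mat_mul n A' Z l (t j))"
    by (rule det_sq_cong) (simp add: eq)
  also have "\<dots> = det_sq r h * det_sq r (\<lambda>i j. mat_mul n A' Z i (t j))"
    by (rule det_sq_mult)
  finally show ?thesis using nz by auto
qed

definition nbf :: "nat \<Rightarrow> nat \<Rightarrow> rmat \<Rightarrow> rmat filter" where
  "nbf R C A = (INF e\<in>{0<..}. principal {A'. \<forall>i<R. \<forall>j<C. \<bar>A' i j - A i j\<bar> < e})"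

lemma nbf_entry: "i < R \<Longrightarrow> j < C \<Longrightarrow> ((\<lambda>A'. A' i j) \<longlongrightarrow> A i j) (nbf R C A)"
proof (rule tendstoI)
  fix e :: real assume ij: "i < R" "j < C" and e: "0 < e"
  show "\<forall>\<^sub>F x in nbf R C A. dist (x i j) (A i j) < e"
    unfolding nbf_def
    by (rule eventually_INF1[where i=e]) (use e ij in \<open>auto simp: eventually_principal dist_real_def\<close>)
qed

lemma nbf_eventually:
  assumes "eventually P (nbf R C A)"
  shows "\<exists>e>0. \<forall>A'. (\<forall>i<R. \<forall>j<C. \<bar>A' i j - A i j\<bar> < e) \<longrightarrow> P A'"
proof -
  let ?F = "\<lambda>e. principal {A'. \<forall>i<R. \<forall>j<C. \<bar>A' i j - A i j\<bar> < e}"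
  have "\<exists>b\<in>{0<..}. eventually P (?F b)"
  proof (rule iffD1[OF eventually_INF_base])
    show "{0<..} \<noteq> ({} :: real set)" by (auto intro: exI[of _ 1])
    show "\<exists>x\<in>{0<..}. ?F x \<le> inf (?F a) (?F b)" if "a \<in> {0<..}" "b \<in> {0<..}" for a b :: real
    proof -
      from that show "\<exists>x\<in>{0<..}. ?F x \<le> inf (?F a) (?F b)"
        by (intro bexI[of _ "min a b"]) (auto simp: inf_principal)
    qed
    show "eventually P (INF b\<in>{0<..}. ?F b)" using assms unfolding nbf_def .
  qed
  then show ?thesis by (auto simp: eventually_principal)
qed

lemma tendsto_det_sq:
  assumes "\<And>i j. i < m \<Longrightarrow> j < m \<Longrightarrow> ((\<lambda>x. f x i j) \<longlongrightarrow> g i j) F"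
  shows "((\<lambda>x. det_sq m (f x)) \<longlongrightarrow> det_sq m g) F"
  unfolding det_sq_def
proof (intro tendsto_sum tendsto_mult tendsto_const tendsto_prod)
  fix p i assume "p \<in> {p. p permutes {..<m}}" "i \<in> {..<m}"
  then have "p i < m" "i < m" using permutes_in_image by fastforce+
  then show "((\<lambda>x. f x i (p i)) \<longlongrightarrow> g i (p i)) F" using assms by blast
qed

lemma submersive:
  assumes Zm: "is_mat n M Z" and nM: "M \<le> n" and dz: "det_sq M Z \<noteq> 0"
  shows "submersive_at k n M Z A"
  unfolding submersive_at_def
proof (intro allI impI)
  fix Y assume Y: "is_mat (k + 2) M Y"
  obtain W where W: "\<forall>i<M. \<forall>j<M. (\<Sum>l<M. W i l * Z l j) = (if i = j then 1 else 0)"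
    using det_sq_inverse[OF dz] by blast
  define X where "X = (\<lambda>i l. if i < k + 2 \<and> l < M then \<Sum>p<M. Y i p * W p l else 0)"
  define G :: rmat where "G = (\<lambda>_ _. 0)"
  have Xm: "is_mat (k + 2) n X" unfolding is_mat_def X_def using nM by auto
  have Gp: "parabolic_lie k G" unfolding parabolic_lie_def is_mat_def G_def by auto
  have "Y = (\<lambda>i j. mat_mul n X Z i j + mat_mul (k + 2) G (mat_mul n A Z) i j)"
  proof (intro ext)
    fix i j
    have G0: "mat_mul (k + 2) G (mat_mul n A Z) i j = 0" unfolding mat_mul_def G_def by simp
    have "mat_mul n X Z i j = Y i j"
    proof (cases "i < k + 2 \<and> j < M")
      case True
      have "mat_mul n X Z i j = (\<Sum>l<M. X i l * Z l j)"
        unfolding mat_mul_def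
        by (rule sum.mono_neutral_right) (use nM in \<open>auto simp: X_def\<close>)
      also have "\<dots> = (\<Sum>l<M. (\<Sum>p<M. Y i p * W p l) * Z l j)"
        by (rule sum.cong) (use True in \<open>auto simp: X_def\<close>)
      also have "\<dots> = (\<Sum>p<M. Y i p * (\<Sum>l<M. W p l * Z l j))" by (rule sum_swap_id)
      also have "\<dots> = (\<Sum>p<M. Y i p * (if p = j then 1 else 0))"
        by (rule sum.cong) (use W True in auto)
      also have "\<dots> = Y i j" using True by (simp add: if_distrib cong: if_cong)
      finally show ?thesis .
    next
      case False
      then have "Y i j = 0" using Y unfolding is_mat_def by auto
      moreover have "mat_mul n X Z i j = 0"
        unfolding mat_mul_def
      proof (rule sum.neutral, intro ballI)
        fix l show "X i l * Z l j = 0"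
          using False Zm unfolding X_def is_mat_def by auto
      qed
      ultimately show ?thesis by simp
    qed
    then show "Y i j = mat_mul n X Z i j + mat_mul (k + 2) G (mat_mul n A Z) i j" using G0 by simp
  qed
  then show "\<exists>X G. is_mat (k + 2) n X \<and> parabolic_lie k G \<and>
          Y = (\<lambda>i j. mat_mul n X Z i j + mat_mul (k + 2) G (mat_mul n A Z) i j)"
    using Xm Gp by blast
qed

theorem mainTheorem3:
  fixes k n :: nat and Z :: rmat
  assumes "n \<ge> k + 4"
    and "positive_mat n (k + 4) Z"
  shows "\<exists>B. Gr_open k n B \<and> Gr_nonneg k n \<subseteq> B \<and>
           (\<forall>x\<in>B. amp_map n Z x \<in> Gr k (k + 4)) \<and>
           (\<forall>A. is_rep k n A \<and> flag_of k A \<in> B \<longrightarrow>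
               is_rep k (k + 4) (mat_mul n A Z) \<and>
               flag_of k (mat_mul n A Z) = amp_map n Z (flag_of k A) \<and>
               submersive_at k n (k + 4) Z A)"
proof -
  define S0 where "S0 = {A. is_rep k n A \<and> full_row_rank (k + 2) (k + 4) (mat_mul n A Z)}"
  define B where "B = flag_of k ` S0"
  have Zm: "is_mat n (k + 4) Z" and Zpos: "\<forall>s\<in>sel (k + 4) n. det_sq (k + 4) (\<lambda>i j. Z (s i) j) > 0"
    using assms(2) unfolding positive_mat_def by auto
  have mem: "A \<in> S0" if hA: "is_rep k n A" "flag_of k A \<in> B" for A
  proof -
    obtain A0 where A0: "A0 \<in> S0" "flag_of k A = flag_of k A0" using hA(2) unfolding B_def by auto
    have rs: "rowspan (k + 2) A0 = rowspan (k + 2) A" using A0(2) unfolding flag_of_def by simp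
    obtain t where t: "t \<in> sel (k + 2) (k + 4)" "max_minor (k + 2) (mat_mul n A0 Z) t \<noteq> 0"
      using A0(1) unfolding S0_def full_row_rank_def by auto
    have "max_minor (k + 2) (mat_mul n A Z) t \<noteq> 0"
      using transfer_minor[OF rs] t(2) unfolding max_minor_def by blast
    then show ?thesis using hA(1) t(1) unfolding S0_def full_row_rank_def by blast
  qed
  have S0eq: "{A. is_rep k n A \<and> flag_of k A \<in> B} = S0"
    using mem unfolding B_def S0_def by blast
  have AZrep: "is_rep k (k + 4) (mat_mul n A Z)" if "A \<in> S0" for A
  proof -
    have Am: "is_mat (k + 2) n A" using that unfolding S0_def is_rep_def by auto
    have "is_mat (k + 2) (k + 4) (mat_mul n A Z)"
      unfolding is_mat_def mat_mul_def
    proof (intro allI impI)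
      fix i j assume "k + 2 \<le> i \<or> k + 4 \<le> j"
      then show "(\<Sum>l<n. A i l * Z l j) = 0" using Am Zm unfolding is_mat_def by auto
    qed
    then show ?thesis using that unfolding S0_def is_rep_def by auto
  qed
  have dZ: "det_sq (k + 4) Z \<noteq> 0"
  proof -
    have "(\<lambda>i. i) \<in> sel (k + 4) n" using assms(1) unfolding sel_def by auto
    then have "det_sq (k + 4) (\<lambda>i j. Z i j) > 0" using Zpos by fastforce
    then show ?thesis by simp
  qed
  have opn: "mat_open (k + 2) n S0"
    unfolding mat_open_def
  proof (intro ballI conjI)
    fix A assume A: "A \<in> S0"
    then show "is_mat (k + 2) n A" unfolding S0_def is_rep_def by auto
    obtain s where s: "s \<in> sel (k + 2) n" "max_minor (k + 2) A s \<noteq> 0"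
      using A unfolding S0_def is_rep_def full_row_rank_def by auto
    obtain t where t: "t \<in> sel (k + 2) (k + 4)" "max_minor (k + 2) (mat_mul n A Z) t \<noteq> 0"
      using A unfolding S0_def full_row_rank_def by auto
    have T1: "((\<lambda>A'. det_sq (k + 2) (\<lambda>i j. A' i (s j))) \<longlongrightarrow> det_sq (k + 2) (\<lambda>i j. A i (s j))) (nbf (k + 2) n A)"
    proof (rule tendsto_det_sq)
      fix i j assume "i < k + 2" "j < k + 2"
      then show "((\<lambda>A'. A' i (s j)) \<longlongrightarrow> A i (s j)) (nbf (k + 2) n A)"
        using s(1) unfolding sel_def by (intro nbf_entry) auto
    qed
    have T2: "((\<lambda>A'. det_sq (k + 2) (\<lambda>i j. mat_mul n A' Z i (t j))) \<longlongrightarrow>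
               det_sq (k + 2) (\<lambda>i j. mat_mul n A Z i (t j))) (nbf (k + 2) n A)"
    proof (rule tendsto_det_sq)
      fix i j assume "i < k + 2" "j < k + 2"
      then show "((\<lambda>A'. mat_mul n A' Z i (t j)) \<longlongrightarrow> mat_mul n A Z i (t j)) (nbf (k + 2) n A)"
        unfolding mat_mul_def by (intro tendsto_sum tendsto_mult tendsto_const nbf_entry) auto
    qed
    have ev: "eventually (\<lambda>A'. det_sq (k + 2) (\<lambda>i j. A' i (s j)) \<noteq> 0 \<and>
                   det_sq (k + 2) (\<lambda>i j. mat_mul n A' Z i (t j)) \<noteq> 0) (nbf (k + 2) n A)"
    proof -
      have e1: "eventually (\<lambda>A'. det_sq (k + 2) (\<lambda>i j. A' i (s j)) \<noteq> 0) (nbf (k + 2) n A)"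
        by (rule tendsto_imp_eventually_ne[OF T1]) (use s(2) in \<open>simp add: max_minor_def\<close>)
      have e2: "eventually (\<lambda>A'. det_sq (k + 2) (\<lambda>i j. mat_mul n A' Z i (t j)) \<noteq> 0) (nbf (k + 2) n A)"
        by (rule tendsto_imp_eventually_ne[OF T2]) (use t(2) in \<open>simp add: max_minor_def\<close>)
      show ?thesis using eventually_conj[OF e1 e2] .
    qed
    obtain e where e: "e > 0" "\<forall>A'. (\<forall>i<k + 2. \<forall>j<n. \<bar>A' i j - A i j\<bar> < e) \<longrightarrow>
          det_sq (k + 2) (\<lambda>i j. A' i (s j)) \<noteq> 0 \<and> det_sq (k + 2) (\<lambda>i j. mat_mul n A' Z i (t j)) \<noteq> 0"
      using nbf_eventually[OF ev] by blast
    show "\<exists>e>0. \<forall>A'. is_mat (k + 2) n A' \<and> (\<forall>i<k + 2. \<forall>j<n. \<bar>A' i j - A i j\<bar> < e) \<longrightarrow> A' \<in> S0"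
    proof (intro exI[of _ e] conjI allI impI)
      show "e > 0" by (rule e(1))
      fix A' assume A': "is_mat (k + 2) n A' \<and> (\<forall>i<k + 2. \<forall>j<n. \<bar>A' i j - A i j\<bar> < e)"
      then have "det_sq (k + 2) (\<lambda>i j. A' i (s j)) \<noteq> 0 \<and> det_sq (k + 2) (\<lambda>i j. mat_mul n A' Z i (t j)) \<noteq> 0"
        using e(2) by simp
      then show "A' \<in> S0" using A' s(1) t(1)
        unfolding S0_def is_rep_def full_row_rank_def max_minor_def by auto
    qed
  qed
  have nonneg: "Gr_nonneg k n \<subseteq> B"
  proof
    fix x assume "x \<in> Gr_nonneg k n"
    then obtain A where A: "x = flag_of k A" "is_rep k n A" "minors_nonneg (k + 2) n A"
      unfolding Gr_nonneg_def by auto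
    have e4: "Suc (Suc (k + 2)) = k + 4" by simp
    have "\<exists>t\<in>sel (k + 2) (Suc (Suc (k + 2))). max_minor (k + 2) (mat_mul n A Z) t \<noteq> 0"
    proof (rule amp_full_rank)
      show "Suc (Suc (k + 2)) \<le> n" using assms(1) by simp
      show "\<forall>s\<in>sel (k + 2) n. 0 \<le> max_minor (k + 2) A s" using A(3) unfolding minors_nonneg_def .
      show "\<exists>s\<in>sel (k + 2) n. max_minor (k + 2) A s \<noteq> 0" using A(2) unfolding is_rep_def full_row_rank_def by blast
      show "\<forall>s\<in>sel (Suc (Suc (k + 2))) n. 0 < det_sq (Suc (Suc (k + 2))) (\<lambda>i j. Z (s i) j)"
        unfolding e4 by (rule Zpos)
    qed
    then have "A \<in> S0" using A(2) unfolding S0_def full_row_rank_def e4 by blast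
    then show "x \<in> B" unfolding B_def A(1) by blast
  qed
  have "Gr_open k n B"
    unfolding Gr_open_def
  proof
    show "B \<subseteq> Gr k n" unfolding B_def S0_def Gr_def by blast
    show "mat_open (k + 2) n {A. is_rep k n A \<and> flag_of k A \<in> B}" unfolding S0eq by (rule opn)
  qed
  moreover have "\<forall>x\<in>B. amp_map n Z x \<in> Gr k (k + 4)"
  proof
    fix x assume "x \<in> B"
    then obtain A where A: "A \<in> S0" "x = flag_of k A" unfolding B_def by blast
    have "amp_map n Z x = flag_of k (mat_mul n A Z)" unfolding A(2) flag_mul ..
    then show "amp_map n Z x \<in> Gr k (k + 4)" unfolding Gr_def using AZrep[OF A(1)] by blast
  qed
  moreover have "\<forall>A. is_rep k n A \<and> flag_of k A \<in> B \<longrightarrow>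
               is_rep k (k + 4) (mat_mul n A Z) \<and>
               flag_of k (mat_mul n A Z) = amp_map n Z (flag_of k A) \<and>
               submersive_at k n (k + 4) Z A"
  proof (intro allI impI conjI)
    fix A assume "is_rep k n A \<and> flag_of k A \<in> B"
    then have "A \<in> S0" using mem by blast
    then show "is_rep k (k + 4) (mat_mul n A Z)" by (rule AZrep)
    show "flag_of k (mat_mul n A Z) = amp_map n Z (flag_of k A)" by (rule flag_mul)
    show "submersive_at k n (k + 4) Z A" by (rule submersive[OF Zm assms(1) dZ])
  qed
  ultimately show ?thesis using nonneg by blast
qed

end
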